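(* Let $c,h,\alpha,\beta\in\mathbb{C}$, $l,\gamma\in\mathbb{C}^*$, and let $M$ be a nonzero $\mathcal{D}$-submodule of $L(c,h,l)\otimes A(\alpha,\beta,\gamma)$. Then (a) there exists $k\in\frac12\mathbb{Z}$ with $\bar{\mathbf{1}}\otimes v_k\in M$; and (b) there exists $k\in\frac12\mathbb{Z}$ such that $\bar{\mathbf{1}}\otimes v_i\in M$ for all $i\in\frac12\mathbb{Z}$ with $i\geq k$.
   Context: The mirror-twisted Heisenberg–Virasoro algebra $\mathcal{D}$ is the complex Lie algebra with basis $\{d_m,h_r,\mathbf{c},\mathbf{l}: m\in\mathbb{Z}, r\in\frac12+\mathbb{Z}\}$ and brackets $[d_m,d_n]=(m-n)d_{m+n}+\frac{m^3-m}{12}\delta_{m+n,0}\mathbf{c}$, $[d_m,h_r]=-rh_{m+r}$, $[h_r,h_s]=r\delta_{r+s,0}\mathbf{l}$, with $\mathbf{c},\mathbf{l}$ central. $\mathcal{D}^{+}=\mathrm{span}\{d_{n},h_{r}: n\in\mathbb{N}, r\in\frac12+\mathbb{Z}_{\ge0}\}$, $\mathcal{D}^0=\mathrm{span}\{d_0,\mathbf{c},\mathbf{l}\}$. $L(c,h,l)$ is the irreducible quotient of the Verma module $M(c,h,l)=U(\mathcal{D})\otimes_{U(\mathcal{D}^0\oplus\mathcal{D}^+)}\mathbb{C}\mathbf{1}$ ($d_0\mathbf{1}=h\mathbf{1}$, $\mathbf{c}\mathbf{1}=c\mathbf{1}$, $\mathbf{l}\mathbf{1}=l\mathbf{1}$,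 $\mathcal{D}^+\mathbf{1}=0$) by its unique maximal proper submodule, and $\bar{\mathbf{1}}$ is the image of $\mathbf{1}$. $A(\alpha,\beta,\gamma)$ is the $\mathcal{D}$-module with basis $\{v_k:k\in\frac12\mathbb{Z}\}$ and $d_mv_k=(\alpha+\beta m-k)v_{m+k}$, $h_rv_n=v_{n+r}$ for $n\in\mathbb{Z}$, $h_rv_s=\gamma v_{r+s}$ for $s\in\frac12+\mathbb{Z}$, $\mathbf{c},\mathbf{l}$ acting as $0$. Tensor products carry the action $x(v\otimes w)=xv\otimes w+v\otimes xw$. *)

theory Defs
  imports Complex_Main
begin

text \<open>Indices in 1/2 Z are encoded by integers: the integer n stands for n/2.
  The element h_r (r in 1/2 + Z) is encoded by the integer j with r = j + 1/2.
  A complex vector space is a type 'v with an explicit scalar multiplication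
  sc satisfying the locale vector_space.\<close>

text \<open>A D-module structure on V (given by the actions dd m of d_m and hh j of h_(j+1/2)),
  in which the central elements c and l act as the scalars cc and ll.\<close>
definition D_module ::
  "(complex \<Rightarrow> 'v::ab_group_add \<Rightarrow> 'v) \<Rightarrow> complex \<Rightarrow> complex \<Rightarrow>
   (int \<Rightarrow> 'v \<Rightarrow> 'v) \<Rightarrow> (int \<Rightarrow> 'v \<Rightarrow> 'v) \<Rightarrow> bool" where
  "D_module sc cc ll dd hh \<longleftrightarrow>
     vector_space sc \<and>
     (\<forall>m. Vector_Spaces.linear sc sc (dd m)) \<and>
     (\<forall>j. Vector_Spaces.linear sc sc (hh j)) \<and>
     (\<forall>m n v. dd m (dd n v) - dd n (dd m v) =
        sc (of_int (m - n)) (dd (m + n) v)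
        + sc (if m + n = 0 then (of_int (m^3 - m) / 12) * cc else 0) v) \<and>
     (\<forall>m j v. dd m (hh j v) - hh j (dd m v) =
        sc (- (of_int j + 1/2)) (hh (m + j) v)) \<and>
     (\<forall>i j v. hh i (hh j v) - hh j (hh i v) =
        sc (if i + j + 1 = 0 then (of_int i + 1/2) * ll else 0) v)"

text \<open>(V, w) is the irreducible highest weight module L(c,h,l) with highest weight
  vector w (the image of 1): an irreducible D-module generated by a nonzero vector w
  with d_0 w = h w, c w = c w, l w = l w, D^+ w = 0.  Such a module is unique up to
  isomorphism and equals L(c,h,l).\<close>
definition is_L_module ::
  "(complex \<Rightarrow> 'v::ab_group_add \<Rightarrow> 'v) \<Rightarrow> complex \<Rightarrow> complex \<Rightarrow> complex \<Rightarrow>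
   (int \<Rightarrow> 'v \<Rightarrow> 'v) \<Rightarrow> (int \<Rightarrow> 'v \<Rightarrow> 'v) \<Rightarrow> 'v \<Rightarrow> bool" where
  "is_L_module sc cc hw ll dd hh w \<longleftrightarrow>
     D_module sc cc ll dd hh \<and>
     w \<noteq> 0 \<and>
     dd 0 w = sc hw w \<and>
     (\<forall>n>0. dd n w = 0) \<and>
     (\<forall>j\<ge>0. hh j w = 0) \<and>
     (\<forall>W. module.subspace sc W \<and> (\<forall>m. dd m ` W \<subseteq> W) \<and> (\<forall>j. hh j ` W \<subseteq> W)
          \<and> (\<exists>u\<in>W. u \<noteq> 0) \<longrightarrow> W = UNIV)"

text \<open>The tensor product L \<otimes> A(\<alpha>,\<beta>,\<gamma>): since A has basis v_k (k in 1/2 Z), an element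
  \<Sum>_k u_k \<otimes> v_k is represented by the finitely supported function n \<mapsto> u_(n/2).\<close>
definition tensor_space :: "(int \<Rightarrow> 'v::zero) set" where
  "tensor_space = {f. finite {n. f n \<noteq> 0}}"

text \<open>Action of d_m on the tensor product:
  d_m (u \<otimes> v_k) = d_m u \<otimes> v_k + (\<alpha> + \<beta> m - k) u \<otimes> v_(m+k).\<close>
definition tensor_d ::
  "(complex \<Rightarrow> 'v \<Rightarrow> 'v) \<Rightarrow> (int \<Rightarrow> 'v \<Rightarrow> 'v::ab_group_add) \<Rightarrow> complex \<Rightarrow> complex \<Rightarrow>
   int \<Rightarrow> (int \<Rightarrow> 'v) \<Rightarrow> int \<Rightarrow> 'v" where
  "tensor_d sc dd \<alpha> \<beta> m f n =
     dd m (f n) + sc (\<alpha> + \<beta> * of_int m - of_int (n - 2*m) / 2) (f (n - 2*m))"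

text \<open>Action of h_r, r = j + 1/2, on the tensor product:
  h_r (u \<otimes> v_s) = h_r u \<otimes> v_s + u \<otimes> h_r v_s, with h_r v_s = v_(s+r) for s in Z
  and h_r v_s = \<gamma> v_(s+r) for s in 1/2 + Z.\<close>
definition tensor_h ::
  "(complex \<Rightarrow> 'v \<Rightarrow> 'v) \<Rightarrow> (int \<Rightarrow> 'v \<Rightarrow> 'v::ab_group_add) \<Rightarrow> complex \<Rightarrow>
   int \<Rightarrow> (int \<Rightarrow> 'v) \<Rightarrow> int \<Rightarrow> 'v" where
  "tensor_h sc hh \<gamma> j f n =
     hh j (f n) + sc (if even (n - (2*j+1)) then 1 else \<gamma>) (f (n - (2*j+1)))"

text \<open>D-submodules of L \<otimes> A (the central elements act by scalars, so closure under
  them is automatic for subspaces).\<close>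
definition tensor_submodule ::
  "(complex \<Rightarrow> 'v \<Rightarrow> 'v) \<Rightarrow> (int \<Rightarrow> 'v \<Rightarrow> 'v::ab_group_add) \<Rightarrow> (int \<Rightarrow> 'v \<Rightarrow> 'v) \<Rightarrow>
   complex \<Rightarrow> complex \<Rightarrow> complex \<Rightarrow> (int \<Rightarrow> 'v) set \<Rightarrow> bool" where
  "tensor_submodule sc dd hh \<alpha> \<beta> \<gamma> M \<longleftrightarrow>
     M \<subseteq> tensor_space \<and>
     (\<lambda>_. 0) \<in> M \<and>
     (\<forall>f\<in>M. \<forall>g\<in>M. (\<lambda>n. f n + g n) \<in> M) \<and>
     (\<forall>a. \<forall>f\<in>M. (\<lambda>n. sc a (f n)) \<in> M) \<and>
     (\<forall>m. \<forall>f\<in>M. tensor_d sc dd \<alpha> \<beta> m f \<in> M) \<and>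
     (\<forall>j. \<forall>f\<in>M. tensor_h sc hh \<gamma> j f \<in> M)"

definition pure_tensor :: "'v::zero \<Rightarrow> int \<Rightarrow> int \<Rightarrow> 'v" where
  "pure_tensor u k = (\<lambda>n. if n = k then u else 0)"

end

theory Submission
  imports Defs
begin

definition coefh :: "complex \<Rightarrow> int \<Rightarrow> complex" where
  "coefh \<gamma> n = (if even n then 1 else \<gamma>)"

locale LTctx =
  fixes sc :: "complex \<Rightarrow> 'v::ab_group_add \<Rightarrow> 'v"
    and dd hh :: "int \<Rightarrow> 'v \<Rightarrow> 'v"
    and w :: 'v
    and cc hw ll \<alpha> \<beta> \<gamma> :: complex
    and M :: "(int \<Rightarrow> 'v) set"
  assumes Lm: "is_L_module sc cc hw ll dd hh w"
    and TM: "tensor_submodule sc dd hh \<alpha> \<beta> \<gamma> M"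
    and gam: "\<gamma> \<noteq> 0"
begin

lemma VS: "vector_space sc"
  using Lm by (simp add: is_L_module_def D_module_def)

sublocale vs: vector_space sc by (rule VS)

lemma lind: "module_hom sc sc (dd m)"
  using Lm by (simp add: is_L_module_def D_module_def module_hom_iff_linear)
lemma linh: "module_hom sc sc (hh m)"
  using Lm by (simp add: is_L_module_def D_module_def module_hom_iff_linear)

lemma d0[simp]: "dd m 0 = 0" using module_hom.zero[OF lind] .
lemma h0[simp]: "hh m 0 = 0" using module_hom.zero[OF linh] .
lemma dadd: "dd m (x + y) = dd m x + dd m y" using module_hom.add[OF lind] .
lemma hadd: "hh m (x + y) = hh m x + hh m y" using module_hom.add[OF linh] .
lemma dsc: "dd m (sc a x) = sc a (dd m x)" using module_hom.scale[OF lind] .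
lemma hsc: "hh m (sc a x) = sc a (hh m x)" using module_hom.scale[OF linh] .

lemma rdd: "dd m (dd n v) - dd n (dd m v) =
        sc (of_int (m - n)) (dd (m + n) v)
        + sc (if m + n = 0 then (of_int (m^3 - m) / 12) * cc else 0) v"
  using Lm by (simp add: is_L_module_def D_module_def)
lemma rdh: "dd m (hh j v) - hh j (dd m v) = sc (- (of_int j + 1/2)) (hh (m + j) v)"
  using Lm by (simp add: is_L_module_def D_module_def)
lemma rhh: "hh i (hh j v) - hh j (hh i v) =
        sc (if i + j + 1 = 0 then (of_int i + 1/2) * ll else 0) v"
  using Lm by (simp add: is_L_module_def D_module_def)

lemma irr: "module.subspace sc W \<Longrightarrow> (\<forall>m. dd m ` W \<subseteq> W) \<Longrightarrow> (\<forall>j. hh j ` W \<subseteq> W)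
   \<Longrightarrow> (\<exists>u\<in>W. u \<noteq> 0) \<Longrightarrow> W = UNIV"
  using Lm unfolding is_L_module_def by blast

lemma wnz: "w \<noteq> 0" using Lm by (simp add: is_L_module_def)

lemma bounded: "\<exists>N. \<forall>m\<ge>N. dd m u = 0 \<and> hh m u = 0"
proof -
  define W where "W = {u. \<exists>N. \<forall>m\<ge>N. dd m u = 0 \<and> hh m u = 0}"
  have sub: "module.subspace sc W"
  proof (rule vs.subspaceI)
    show "0 \<in> W" unfolding W_def by auto
  next
    fix x y assume "x \<in> W" "y \<in> W"
    then obtain N1 N2 where "\<forall>m\<ge>N1. dd m x = 0 \<and> hh m x = 0" "\<forall>m\<ge>N2. dd m y = 0 \<and> hh m y = 0"
      unfolding W_def by auto
    then show "x + y \<in> W" unfolding W_def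
      by (intro CollectI exI[of _ "max N1 N2"]) (auto simp: dadd hadd)
  next
    fix c x assume "x \<in> W"
    then obtain N1 where "\<forall>m\<ge>N1. dd m x = 0 \<and> hh m x = 0"
      unfolding W_def by auto
    then show "sc c x \<in> W" unfolding W_def
      by (intro CollectI exI[of _ N1]) (auto simp: dsc hsc)
  qed
  have cd: "dd k ` W \<subseteq> W" for k
  proof
    fix y assume "y \<in> dd k ` W"
    then obtain u where y: "y = dd k u" and "u \<in> W" by auto
    then obtain N where N: "\<forall>m\<ge>N. dd m u = 0 \<and> hh m u = 0" unfolding W_def by auto
    have "\<forall>m\<ge>max (max N (N - k)) (1 - k). dd m y = 0 \<and> hh m y = 0"
    proof (intro allI impI conjI)
      fix m assume m: "m \<ge> max (max N (N - k)) (1 - k)"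
      have "dd m (dd k u) - dd k (dd m u) = sc (of_int (m - k)) (dd (m + k) u)
        + sc (if m + k = 0 then (of_int (m^3 - m) / 12) * cc else 0) u" by (rule rdd)
      then show "dd m y = 0" using N m y by auto
      have "dd k (hh m u) - hh m (dd k u) = sc (- (of_int m + 1/2)) (hh (k + m) u)" by (rule rdh)
      then show "hh m y = 0" using N m y by (auto simp: add.commute)
    qed
    then show "y \<in> W" unfolding W_def by blast
  qed
  have ch: "hh k ` W \<subseteq> W" for k
  proof
    fix y assume "y \<in> hh k ` W"
    then obtain u where y: "y = hh k u" and "u \<in> W" by auto
    then obtain N where N: "\<forall>m\<ge>N. dd m u = 0 \<and> hh m u = 0" unfolding W_def by auto
    have "\<forall>m\<ge>max (max N (N - k)) (- k). dd m y = 0 \<and> hh m y = 0"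
    proof (intro allI impI conjI)
      fix m assume m: "m \<ge> max (max N (N - k)) (- k)"
      have "dd m (hh k u) - hh k (dd m u) = sc (- (of_int k + 1/2)) (hh (m + k) u)" by (rule rdh)
      then show "dd m y = 0" using N m y by auto
      have "hh m (hh k u) - hh k (hh m u) =
        sc (if m + k + 1 = 0 then (of_int m + 1/2) * ll else 0) u" by (rule rhh)
      then show "hh m y = 0" using N m y by auto
    qed
    then show "y \<in> W" unfolding W_def by blast
  qed
  have "w \<in> W" unfolding W_def
    using Lm by (intro CollectI exI[of _ 1]) (auto simp: is_L_module_def)
  then have "W = UNIV" using irr[OF sub] cd ch wnz by blast
  then show ?thesis unfolding W_def by auto
qed

definition bnd :: "int \<Rightarrow> (int \<Rightarrow> 'v) \<Rightarrow> bool" where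
  "bnd N f \<longleftrightarrow> (\<forall>n m. m \<ge> N \<longrightarrow> dd m (f n) = 0 \<and> hh m (f n) = 0)"

lemma Msub: "M \<subseteq> tensor_space" using TM by (simp add: tensor_submodule_def)
lemma M0: "(\<lambda>_. 0) \<in> M" using TM by (simp add: tensor_submodule_def)
lemma Madd: "f \<in> M \<Longrightarrow> g \<in> M \<Longrightarrow> (\<lambda>n. f n + g n) \<in> M" using TM by (simp add: tensor_submodule_def)
lemma Msc: "f \<in> M \<Longrightarrow> (\<lambda>n. sc a (f n)) \<in> M" using TM by (simp add: tensor_submodule_def)
lemma Md: "f \<in> M \<Longrightarrow> tensor_d sc dd \<alpha> \<beta> m f \<in> M" using TM by (simp add: tensor_submodule_def)
lemma Mh: "f \<in> M \<Longrightarrow> tensor_h sc hh \<gamma> j f \<in> M" using TM by (simp add: tensor_submodule_def)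

lemma bnd_exists:
  assumes "f \<in> tensor_space"
  shows "\<exists>N\<ge>0. bnd N f"
proof -
  have "\<forall>u. \<exists>N. \<forall>m\<ge>N. dd m u = 0 \<and> hh m u = 0" using bounded by blast
  then obtain B where B: "\<And>u m. m \<ge> B u \<Longrightarrow> dd m u = 0 \<and> hh m u = 0" by metis
  define S where "S = {n. f n \<noteq> 0}"
  have fin: "finite S" using assms by (simp add: tensor_space_def S_def)
  define N where "N = max 0 (Max (insert 0 ((\<lambda>n. B (f n)) ` S)))"
  have "bnd N f" unfolding bnd_def
  proof (intro allI impI)
    fix n m assume m: "N \<le> m"
    show "dd m (f n) = 0 \<and> hh m (f n) = 0"
    proof (cases "n \<in> S")
      case True
      then have "B (f n) \<le> Max (insert 0 ((\<lambda>n. B (f n)) ` S))"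
        using fin by (intro Max_ge) auto
      then show ?thesis using B[of "f n" m] m unfolding N_def by auto
    next
      case False then show ?thesis by (simp add: S_def)
    qed
  qed
  moreover have "N \<ge> 0" unfolding N_def by simp
  ultimately show ?thesis by blast
qed

lemma th_big:
  assumes "bnd N f" "j \<ge> N"
  shows "tensor_h sc hh \<gamma> j f = (\<lambda>n. sc (coefh \<gamma> (n - (2*j+1))) (f (n - (2*j+1))))"
  using assms by (auto simp: tensor_h_def bnd_def coefh_def)

lemma td_big:
  assumes "bnd N f" "m \<ge> N"
  shows "tensor_d sc dd \<alpha> \<beta> m f = (\<lambda>n. sc (\<alpha> + \<beta> * of_int m - of_int (n - 2*m) / 2) (f (n - 2*m)))"
  using assms by (auto simp: tensor_d_def bnd_def)

lemma bnd_sc: "bnd N f \<Longrightarrow> bnd N (\<lambda>n. sc (a n) (f (s n)))"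
  by (auto simp: bnd_def dsc hsc)

lemma coefh_prod: "coefh \<gamma> x * coefh \<gamma> (x - (2*j+1)) = \<gamma>"
  by (auto simp: coefh_def)

lemma coefh_nz: "coefh \<gamma> x \<noteq> 0" using gam by (auto simp: coefh_def)

lemma shift:
  assumes f: "f \<in> M" and b: "bnd N f" and j: "j \<ge> N" and j': "j' \<ge> N"
  shows "(\<lambda>n. f (n - 2*(j+j'+1))) \<in> M"
proof -
  have g: "tensor_h sc hh \<gamma> j f \<in> M" by (rule Mh[OF f])
  have geq: "tensor_h sc hh \<gamma> j f = (\<lambda>n. sc (coefh \<gamma> (n - (2*j+1))) (f (n - (2*j+1))))"
    by (rule th_big[OF b j])
  have bg: "bnd N (tensor_h sc hh \<gamma> j f)" unfolding geq by (rule bnd_sc[OF b])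
  have "tensor_h sc hh \<gamma> j' (tensor_h sc hh \<gamma> j f) \<in> M" by (rule Mh[OF g])
  also have "tensor_h sc hh \<gamma> j' (tensor_h sc hh \<gamma> j f) = (\<lambda>n. sc \<gamma> (f (n - 2*(j+j'+1))))"
    unfolding th_big[OF bg j'] unfolding geq
  proof
    fix n
    have e: "n - (2 * j' + 1) - (2 * j + 1) = n - 2*(j+j'+1)" by simp
    show "sc (coefh \<gamma> (n - (2 * j' + 1))) (sc (coefh \<gamma> (n - (2 * j' + 1) - (2 * j + 1))) (f (n - (2 * j' + 1) - (2 * j + 1)))) =
         sc \<gamma> (f (n - 2 * (j + j' + 1)))"
      unfolding vs.scale_scale unfolding coefh_prod unfolding e ..
  qed
  finally have "(\<lambda>n. sc (1/\<gamma>) (sc \<gamma> (f (n - 2*(j+j'+1))))) \<in> M" by (rule Msc)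
  then show ?thesis using gam by simp
qed

lemma hstep:
  assumes f: "pure_tensor u i \<in> M" and b: "bnd N (pure_tensor u i)" and j: "j \<ge> N"
  shows "pure_tensor u (i + 2*j+1) \<in> M"
proof -
  have "tensor_h sc hh \<gamma> j (pure_tensor u i) \<in> M" by (rule Mh[OF f])
  then have "(\<lambda>n. sc (1 / coefh \<gamma> i) (tensor_h sc hh \<gamma> j (pure_tensor u i) n)) \<in> M" by (rule Msc)
  also have "(\<lambda>n. sc (1 / coefh \<gamma> i) (tensor_h sc hh \<gamma> j (pure_tensor u i) n)) = pure_tensor u (i + 2*j+1)"
    unfolding th_big[OF b j] using coefh_nz[of i] by (auto simp: pure_tensor_def)
  finally show ?thesis .
qed

lemma reduce:
  "f \<in> M \<Longrightarrow> f \<noteq> (\<lambda>_. 0) \<Longrightarrow> \<exists>u k. u \<noteq> 0 \<and> pure_tensor u k \<in> M"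
proof (induction "card {n. f n \<noteq> 0}" arbitrary: f rule: less_induct)
  case less
  define S where "S = {n. f n \<noteq> 0}"
  have fin: "finite S" using less.prems Msub by (auto simp: tensor_space_def S_def)
  have ne: "S \<noteq> {}" using less.prems by (auto simp: S_def)
  show ?case
  proof (cases "card S = 1")
    case True
    then obtain k where Sk: "S = {k}" by (auto simp: card_Suc_eq)
    have "f = pure_tensor (f k) k"
      using Sk by (auto simp: pure_tensor_def S_def fun_eq_iff)
    moreover have "f k \<noteq> 0" using Sk by (auto simp: S_def)
    ultimately show ?thesis using less.prems by metis
  next
    case False
    obtain k1 where k1: "k1 \<in> S" using ne by auto
    have "S \<noteq> {k1}" using False by auto
    then obtain k0 where k0: "k0 \<in> S" "k0 \<noteq> k1" using k1 by auto
    obtain N where N0: "N \<ge> 0" and bN: "bnd N f" using bnd_exists less.prems Msub by blast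
    define m where "m = 2*N+1"
    have mN: "m \<ge> N" using N0 by (simp add: m_def)
    have g1: "(\<lambda>n. f (n - 2*(N+N+1))) \<in> M" by (rule shift[OF less.prems(1) bN]) auto
    have e2: "2*(N+N+1) = 2*m" by (simp add: m_def)
    have g2: "tensor_d sc dd \<alpha> \<beta> m f \<in> M" by (rule Md[OF less.prems(1)])
    define c where "c = \<alpha> + \<beta> * of_int m - of_int k1 / 2"
    define H where "H = (\<lambda>n. tensor_d sc dd \<alpha> \<beta> m f n + sc (-c) (f (n - 2*(N+N+1))))"
    have HM: "H \<in> M" unfolding H_def by (rule Madd[OF g2 Msc[OF g1]])
    have Heq: "H n = sc ((of_int k1 - of_int (n - 2*m))/2) (f (n - 2*m))" for n
    proof -
      have co: "(\<alpha> + \<beta> * of_int m - of_int (n - 2*m) / 2) + (-c) = (of_int k1 - of_int (n - 2*m))/2"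
        by (simp add: c_def field_simps)
      show ?thesis unfolding H_def td_big[OF bN mN] e2
        by (simp only: vs.scale_left_distrib[symmetric] co)
    qed
    have supp: "{n. H n \<noteq> 0} = (\<lambda>x. x + 2*m) ` (S - {k1})"
    proof (rule set_eqI)
      fix n
      have "(of_int k1 - of_int (n - 2*m) :: complex)/2 = 0 \<longleftrightarrow> n - 2*m = k1"
      proof -
        have "(of_int k1 - of_int (n - 2*m) :: complex)/2 = 0 \<longleftrightarrow> (of_int k1 :: complex) = of_int (n - 2*m)"
          by (simp del: of_int_diff of_int_mult)
        also have "\<dots> \<longleftrightarrow> n - 2*m = k1" by (simp only: of_int_eq_iff) auto
        finally show ?thesis .
      qed
      then show "n \<in> {n. H n \<noteq> 0} \<longleftrightarrow> n \<in> (\<lambda>x. x + 2*m) ` (S - {k1})"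
        unfolding Heq by (auto simp: S_def image_iff intro!: bexI[of _ "n - 2*m"])
    qed
    have "card {n. H n \<noteq> 0} = card (S - {k1})"
      unfolding supp by (rule card_image) (simp add: inj_on_def)
    also have "\<dots> < card S" by (rule card_Diff1_less[OF fin k1])
    finally have lt: "card {n. H n \<noteq> 0} < card {n. f n \<noteq> 0}" by (simp add: S_def)
    have "H (k0 + 2*m) \<noteq> 0"
      unfolding Heq using k0 by (auto simp: S_def)
    then have "H \<noteq> (\<lambda>_. 0)" by auto
    then show ?thesis using less.hyps[OF lt HM] by blast
  qed
qed

lemma bnd_pt: "bnd N (pure_tensor u k) \<Longrightarrow> bnd N (pure_tensor u i)"
  unfolding bnd_def pure_tensor_def by (metis (full_types) d0 h0)

lemma ptU:
  assumes pk: "pure_tensor u k \<in> M"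
  shows "\<exists>K. \<forall>i\<ge>K. pure_tensor u i \<in> M"
proof -
  obtain N where N0: "N \<ge> 0" and bN: "bnd N (pure_tensor u k)" using bnd_exists pk Msub by blast
  have A: "pure_tensor u (k + 2*a) \<in> M" if a: "a \<ge> 2*N+1" for a
  proof -
    have "(\<lambda>n. pure_tensor u k (n - 2*(N+(a-1-N)+1))) \<in> M"
      by (rule shift[OF pk bN]) (use a N0 in auto)
    also have "(\<lambda>n. pure_tensor u k (n - 2*(N+(a-1-N)+1))) = pure_tensor u (k + 2*a)"
      by (auto simp: pure_tensor_def fun_eq_iff)
    finally show ?thesis .
  qed
  have "pure_tensor u i \<in> M" if i: "i \<ge> k + 6*N+3" for i
  proof (cases "even (i - k)")
    case True
    then obtain a where "i - k = 2*a" by blast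
    then have "i = k + 2*a" "a \<ge> 2*N+1" using i N0 by auto
    then show ?thesis using A by simp
  next
    case False
    then have "even (i - k - (2*N+1))" by simp
    then obtain a where "i - k - (2*N+1) = 2*a" by blast
    then have ia: "i = k + 2*a + 2*N + 1" and "a \<ge> 2*N+1" using i N0 by auto
    then have "pure_tensor u (k + 2*a) \<in> M" using A by simp
    from hstep[OF this bnd_pt[OF bN] order_refl] show ?thesis using ia by simp
  qed
  then show ?thesis by blast
qed

lemma U_all:
  assumes ne: "\<exists>f\<in>M. f \<noteq> (\<lambda>_. 0)"
  shows "\<exists>K. \<forall>i\<ge>K. pure_tensor w i \<in> M"
proof -
  define U where "U = {u. \<exists>K. \<forall>i\<ge>K. pure_tensor u i \<in> M}"
  obtain f where "f \<in> M" "f \<noteq> (\<lambda>_. 0)" using ne by blast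
  then obtain u k where u: "u \<noteq> 0" "pure_tensor u k \<in> M" using reduce by blast
  have uU: "u \<in> U" unfolding U_def using ptU[OF u(2)] by blast
  have sub: "module.subspace sc U"
  proof (rule vs.subspaceI)
    have z: "pure_tensor 0 i = (\<lambda>_. 0)" for i by (simp add: pure_tensor_def fun_eq_iff)
    show "0 \<in> U" unfolding U_def by (simp add: z M0)
  next
    fix x y assume "x \<in> U" "y \<in> U"
    then obtain K1 K2 where K: "\<forall>i\<ge>K1. pure_tensor x i \<in> M" "\<forall>i\<ge>K2. pure_tensor y i \<in> M"
      unfolding U_def by auto
    have "pure_tensor (x + y) i = (\<lambda>n. pure_tensor x i n + pure_tensor y i n)" for i
      by (simp add: pure_tensor_def fun_eq_iff)
    then have "\<forall>i\<ge>max K1 K2. pure_tensor (x + y) i \<in> M" using K Madd by auto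
    then show "x + y \<in> U" unfolding U_def by blast
  next
    fix a x assume "x \<in> U"
    then obtain K1 where K: "\<forall>i\<ge>K1. pure_tensor x i \<in> M"
      unfolding U_def by auto
    have "pure_tensor (sc a x) i = (\<lambda>n. sc a (pure_tensor x i n))" for i
      by (simp add: pure_tensor_def fun_eq_iff)
    then have "\<forall>i\<ge>K1. pure_tensor (sc a x) i \<in> M" using K Msc by auto
    then show "sc a x \<in> U" unfolding U_def by blast
  qed
  have cd: "dd m ` U \<subseteq> U" for m
  proof
    fix y assume "y \<in> dd m ` U"
    then obtain x where y: "y = dd m x" and "x \<in> U" by auto
    then obtain K where K: "\<forall>i\<ge>K. pure_tensor x i \<in> M" unfolding U_def by auto
    have eq: "pure_tensor (dd m x) i = (\<lambda>n. tensor_d sc dd \<alpha> \<beta> m (pure_tensor x i) n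
        + sc (-(\<alpha> + \<beta> * of_int m - of_int i / 2)) (pure_tensor x (i + 2*m) n))" for i
      by (auto simp: pure_tensor_def fun_eq_iff tensor_d_def)
        (simp_all only: vs.scale_left_distrib[symmetric], simp_all)
    have "\<forall>i\<ge>max K (K - 2*m). pure_tensor y i \<in> M"
    proof (intro allI impI)
      fix i assume i: "max K (K - 2*m) \<le> i"
      then have a: "pure_tensor x i \<in> M" "pure_tensor x (i + 2*m) \<in> M" using K by auto
      show "pure_tensor y i \<in> M" unfolding y eq by (rule Madd[OF Md[OF a(1)] Msc[OF a(2)]])
    qed
    then show "y \<in> U" unfolding U_def by blast
  qed
  have ch: "hh j ` U \<subseteq> U" for j
  proof
    fix y assume "y \<in> hh j ` U"
    then obtain x where y: "y = hh j x" and "x \<in> U" by auto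
    then obtain K where K: "\<forall>i\<ge>K. pure_tensor x i \<in> M" unfolding U_def by auto
    have eq: "pure_tensor (hh j x) i = (\<lambda>n. tensor_h sc hh \<gamma> j (pure_tensor x i) n
        + sc (-(if even i then 1 else \<gamma>)) (pure_tensor x (i + (2*j+1)) n))" for i
      by (auto simp: pure_tensor_def fun_eq_iff tensor_h_def) presburger+
    have "\<forall>i\<ge>max K (K - (2*j+1)). pure_tensor y i \<in> M"
    proof (intro allI impI)
      fix i assume i: "max K (K - (2*j+1)) \<le> i"
      then have a: "pure_tensor x i \<in> M" "pure_tensor x (i + (2*j+1)) \<in> M" using K by auto
      show "pure_tensor y i \<in> M" unfolding y eq by (rule Madd[OF Mh[OF a(1)] Msc[OF a(2)]])
    qed
    then show "y \<in> U" unfolding U_def by blast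
  qed
  have "U = UNIV" using irr[OF sub] cd ch uU u(1) by blast
  then show ?thesis unfolding U_def by blast
qed

end

theorem lemma3p5:
  fixes sc :: "complex \<Rightarrow> 'v::ab_group_add \<Rightarrow> 'v"
    and dd hh :: "int \<Rightarrow> 'v \<Rightarrow> 'v"
    and w :: 'v
    and c h l \<alpha> \<beta> \<gamma> :: complex
    and M :: "(int \<Rightarrow> 'v) set"
  assumes "l \<noteq> 0" and "\<gamma> \<noteq> 0"
    and "is_L_module sc c h l dd hh w"
    and "tensor_submodule sc dd hh \<alpha> \<beta> \<gamma> M"
    and "\<exists>f\<in>M. f \<noteq> (\<lambda>_. 0)"
  shows "(\<exists>k::int. pure_tensor w k \<in> M) \<and>
         (\<exists>k::int. \<forall>i\<ge>k. pure_tensor w i \<in> M)"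
proof -
  interpret LTctx sc dd hh w c h l \<alpha> \<beta> \<gamma> M
    using assms by unfold_locales auto
  obtain K where "\<forall>i\<ge>K. pure_tensor w i \<in> M" using U_all assms(5) by blast
  then show ?thesis by blast
qed

end
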